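(* Let $X$ be a collectionwise normal space and $\mathcal{U}$ an open cover of $X$. Then $X$ admits a $\mathcal{U}$-small partition of unity if and only if $\mathcal{U}$ has a $\sigma$-discrete closed refinement.
   Context: $X$ is collectionwise normal if it is $T_1$ and for every discrete family $\{A_s\}_{s\in S}$ of closed sets there is a discrete family $\{U_s\}_{s\in S}$ of open sets with $A_s\subset U_s$ for all $s$. A family of subsets is discrete if each point has a neighborhood meeting at most one member; $\sigma$-discrete means a countable union of discrete families. A closed refinement of $\mathcal{U}$ is a cover by closed sets each contained in some element of $\mathcal{U}$. A partition of unity on $X$ indexed by a nonempty set $T$ is a family $\{f_t\}_{t\in T}$ of functions $f_t:X\to[0,1]$ with $\sum_{t}f_t(x)=1$ for all $x$, such that the induced map $X\to l_1(T)$ is continuous for the $l_1$-norm; it is $\mathcal{U}$-small if each carrier $f_t^{-1}((0,1])$ is contained in some element of $\mathcal{U}$. *)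

theory Defs
  imports "HOL-Analysis.Analysis"
begin

definition discrete_family :: "'a topology \<Rightarrow> 's set \<Rightarrow> ('s \<Rightarrow> 'a set) \<Rightarrow> bool" where
  "discrete_family X S A \<longleftrightarrow>
     (\<forall>x\<in>topspace X. \<exists>V. openin X V \<and> x \<in> V \<and>
        (\<forall>s\<in>S. \<forall>t\<in>S. A s \<inter> V \<noteq> {} \<and> A t \<inter> V \<noteq> {} \<longrightarrow> s = t))"

definition discrete_collection :: "'a topology \<Rightarrow> 'a set set \<Rightarrow> bool" where
  "discrete_collection X \<F> \<longleftrightarrow> discrete_family X \<F> id"

definition sigma_discrete :: "'a topology \<Rightarrow> 'a set set \<Rightarrow> bool" where
  "sigma_discrete X \<F> \<longleftrightarrow>
     (\<exists>G :: nat \<Rightarrow> 'a set set. \<F> = (\<Union>n. G n) \<and> (\<forall>n. discrete_collection X (G n)))"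

definition collectionwise_normal :: "'a topology \<Rightarrow> bool" where
  "collectionwise_normal X \<longleftrightarrow> t1_space X \<and>
     (\<forall>\<A>. (\<forall>A\<in>\<A>. closedin X A) \<and> discrete_collection X \<A> \<longrightarrow>
        (\<exists>U. (\<forall>A\<in>\<A>. openin X (U A) \<and> A \<subseteq> U A) \<and> discrete_family X \<A> U))"

definition open_cover :: "'a topology \<Rightarrow> 'a set set \<Rightarrow> bool" where
  "open_cover X \<U> \<longleftrightarrow> (\<forall>U\<in>\<U>. openin X U) \<and> \<Union>\<U> = topspace X"

definition closed_refinement :: "'a topology \<Rightarrow> 'a set set \<Rightarrow> 'a set set \<Rightarrow> bool" where
  "closed_refinement X \<F> \<U> \<longleftrightarrow>
     (\<forall>F\<in>\<F>. closedin X F \<and> (\<exists>U\<in>\<U>. F \<subseteq> U)) \<and> \<Union>\<F> = topspace X"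

text \<open>l1 distance between the points of l1(T) induced at x and y.\<close>
definition l1_dist :: "'i set \<Rightarrow> ('i \<Rightarrow> 'a \<Rightarrow> real) \<Rightarrow> 'a \<Rightarrow> 'a \<Rightarrow> real" where
  "l1_dist T f x y = (\<Sum>\<^sub>\<infinity>t\<in>T. \<bar>f t x - f t y\<bar>)"

definition partition_of_unity :: "'a topology \<Rightarrow> 'i set \<Rightarrow> ('i \<Rightarrow> 'a \<Rightarrow> real) \<Rightarrow> bool" where
  "partition_of_unity X T f \<longleftrightarrow> T \<noteq> {} \<and>
     (\<forall>t\<in>T. \<forall>x\<in>topspace X. 0 \<le> f t x \<and> f t x \<le> 1) \<and>
     (\<forall>x\<in>topspace X. ((\<lambda>t. f t x) has_sum 1) T) \<and>
     (\<forall>x0\<in>topspace X. \<forall>e>0. \<exists>V. openin X V \<and> x0 \<in> V \<and>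
        (\<forall>x\<in>V. l1_dist T f x x0 < e))"

definition carrier_pou :: "'a topology \<Rightarrow> ('a \<Rightarrow> real) \<Rightarrow> 'a set" where
  "carrier_pou X g = {x\<in>topspace X. 0 < g x}"

definition small_partition_of_unity ::
    "'a topology \<Rightarrow> 'a set set \<Rightarrow> 'i set \<Rightarrow> ('i \<Rightarrow> 'a \<Rightarrow> real) \<Rightarrow> bool" where
  "small_partition_of_unity X \<U> T f \<longleftrightarrow> partition_of_unity X T f \<and>
     (\<forall>t\<in>T. \<exists>U\<in>\<U>. carrier_pou X (f t) \<subseteq> U)"

end

theory Submission
  imports Defs
begin

lemma pou_summable:
  assumes "partition_of_unity X T f" "x\<in>topspace X"
  shows "((\<lambda>t. f t x) has_sum 1) T" "(\<lambda>t. f t x) summable_on T"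
  using assms unfolding partition_of_unity_def summable_on_def by blast+

lemma pou_single:
  assumes P: "partition_of_unity X T f" and x: "x\<in>topspace X" and y: "y \<in> topspace X" and t: "t\<in>T"
  shows "\<bar>f t x - f t y\<bar> \<le> l1_dist T f x y"
proof -
  have "(\<lambda>t. f t x - f t y) summable_on T"
    using summable_on_add[OF pou_summable(2)[OF P x], of "\<lambda>t. - f t y"] summable_on_uminus[of "\<lambda>t. f t y" T] pou_summable(2)[OF P y] by simp
  hence s: "(\<lambda>t. \<bar>f t x - f t y\<bar>) summable_on T"
    using summable_on_iff_abs_summable_on_real[of "\<lambda>t. f t x - f t y" T] by simp
  have "infsum (\<lambda>t. \<bar>f t x - f t y\<bar>) {t} \<le> infsum (\<lambda>t. \<bar>f t x - f t y\<bar>) T"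
    by (rule infsum_mono2) (use s t in auto)
  thus ?thesis by (simp add: l1_dist_def)
qed

lemma finite_ge:
  fixes a :: "'i \<Rightarrow> real"
  assumes h: "(a has_sum 1) T" and nn: "\<forall>t\<in>T. 0 \<le> a t" and c: "c > 0"
  shows "finite {t\<in>T. c \<le> a t}"
proof (rule ccontr)
  assume inf: "infinite {t\<in>T. c \<le> a t}"
  obtain N :: nat where N: "1 / c < real N" using reals_Archimedean2 by blast
  obtain F where F: "finite F" "card F = N" "F \<subseteq> {t\<in>T. c \<le> a t}"
    using infinite_arbitrarily_large[OF inf] by blast
  have s: "a summable_on T" using h summable_on_def by blast
  have "infsum a F \<le> infsum a T"
    by (rule infsum_mono2) (use F s nn in auto)
  hence "sum a F \<le> 1" using F h infsumI by fastforce
  moreover have "sum a F \<ge> sum (\<lambda>_. c) F" by (rule sum_mono) (use F in auto)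
  hence "sum a F \<ge> real N * c" using F by simp
  moreover have "real N * c > 1" using N c by (simp add: field_simps)
  ultimately show False by linarith
qed

lemma pou_nbhd:
  assumes P: "partition_of_unity X T f" and x0: "x0\<in>topspace X" and e: "e > 0"
  obtains V where "openin X V" "x0 \<in> V" "\<And>x t. x\<in>V \<Longrightarrow> t\<in>T \<Longrightarrow> \<bar>f t x - f t x0\<bar> < e"
proof -
  obtain V where V: "openin X V" "x0 \<in> V" "\<forall>x\<in>V. l1_dist T f x x0 < e"
    using P x0 e unfolding partition_of_unity_def by blast
  show ?thesis
  proof (rule that[OF V(1,2)])
    fix x t assume "x \<in> V" "t \<in> T"
    moreover have "x \<in> topspace X" using V(1) \<open>x\<in>V\<close> openin_subset by blast
    ultimately show "\<bar>f t x - f t x0\<bar> < e" using pou_single[OF P _ x0] V(3) by fastforce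
  qed
qed

lemma cover_point:
  assumes P: "partition_of_unity X T f" and x: "x\<in>topspace X"
  shows "\<exists>S k. S \<subseteq> T \<and> finite S \<and> S \<noteq> {} \<and>
     (\<forall>s\<in>S. 1 / real (Suc k) \<le> f s x \<and> (\<forall>t\<in>T-S. 1 / real (Suc k) \<le> f s x - f t x))"
proof -
  define a where "a t = f t x" for t
  have h: "(a has_sum 1) T" using pou_summable[OF P x] unfolding a_def[abs_def] by simp
  have nn: "\<forall>t\<in>T. 0 \<le> a t" using P x by (simp add: partition_of_unity_def a_def)
  obtain t0 where t0: "t0 \<in> T" "a t0 > 0"
  proof -
    have "\<exists>t\<in>T. a t > 0"
    proof (rule ccontr)
      assume "\<not> (\<exists>t\<in>T. a t > 0)"
      hence "\<forall>t\<in>T. a t = 0" using nn by force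
      hence "(a has_sum 0) T" by (simp add: has_sum_0)
      with h show False using has_sum_unique by fastforce
    qed
    thus ?thesis using that by blast
  qed
  define c where "c = a t0 / 2"
  have c: "c > 0" "c < a t0" using t0 by (auto simp: c_def)
  define A where "A = {t\<in>T. c \<le> a t}"
  have fA: "finite A" unfolding A_def by (rule finite_ge[OF h nn c(1)])
  have t0A: "t0 \<in> A" using t0 c by (auto simp: A_def)
  define m where "m = Max (a ` A)"
  have m: "a t \<le> m" if "t \<in> A" for t using fA that by (simp add: m_def)
  have mt0: "a t0 \<le> m" using m t0A .
  have "m \<in> a ` A" unfolding m_def using fA t0A by (intro Max_in) auto
  define S where "S = {t\<in>A. a t = m}"
  have Sne: "S \<noteq> {}" using \<open>m \<in> a ` A\<close> by (auto simp: S_def)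
  have fS: "finite S" using fA by (simp add: S_def)
  have ST: "S \<subseteq> T" by (auto simp: S_def A_def)
  define B where "B = insert c (a ` (A - S))"
  have fB: "finite B" using fA by (simp add: B_def)
  define M where "M = Max B"
  have Mlt: "M < m" unfolding M_def
  proof (subst Max_less_iff)
    show "\<forall>b\<in>B. b < m" using c mt0 m unfolding B_def S_def by (smt (verit) DiffE image_iff insert_iff mem_Collect_eq)
  qed (use fB in \<open>auto simp: B_def\<close>)
  have cM: "c \<le> M" using fB by (simp add: M_def B_def)
  have Mge: "a t \<le> M" if "t \<in> T - S" for t
  proof (cases "t \<in> A")
    case True
    hence "a t \<in> B" using that by (auto simp: B_def)
    thus ?thesis using fB by (simp add: M_def)
  next
    case False
    hence "a t < c" using that unfolding A_def by auto
    thus ?thesis using cM by linarith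
  qed
  obtain k where k: "inverse (real (Suc k)) < m - M" using reals_Archimedean[of "m - M"] Mlt by auto
  have r: "1 / real (Suc k) < m - M" using k by (simp add: inverse_eq_divide)
  show ?thesis
  proof (intro exI conjI)
    show "\<forall>s\<in>S. 1 / real (Suc k) \<le> f s x \<and> (\<forall>t\<in>T-S. 1 / real (Suc k) \<le> f s x - f t x)"
    proof (intro ballI conjI)
      fix s assume s: "s \<in> S"
      hence as: "a s = m" by (simp add: S_def)
      show "1 / real (Suc k) \<le> f s x" using as r cM c by (simp add: a_def)
      fix t assume "t \<in> T - S"
      thus "1 / real (Suc k) \<le> f s x - f t x" using Mge[of t] as r by (simp add: a_def)
    qed
  qed (use ST fS Sne in auto)
qed

lemma disc_arith:
  fixes r a b a' b' a0 b0 :: real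
  shows "r \<le> a - b \<Longrightarrow> r \<le> b' - a' \<Longrightarrow> \<bar>a - a0\<bar> < r/4 \<Longrightarrow> \<bar>b - b0\<bar> < r/4 \<Longrightarrow>
     \<bar>a' - a0\<bar> < r/4 \<Longrightarrow> \<bar>b' - b0\<bar> < r/4 \<Longrightarrow> False"
  by linarith

lemma dir1:
  assumes sp: "small_partition_of_unity X \<U> T f"
  shows "\<exists>\<F>. closed_refinement X \<F> \<U> \<and> sigma_discrete X \<F>"
proof -
  have P: "partition_of_unity X T f" using sp by (simp add: small_partition_of_unity_def)
  define W where "W S k = {x\<in>topspace X. \<forall>s\<in>S. 1 / real (Suc k) \<le> f s x \<and>
       (\<forall>t\<in>T-S. 1 / real (Suc k) \<le> f s x - f t x)}" for S k
  define G where "G n = {W S (snd (prod_decode n)) | S. S \<subseteq> T \<and> finite S \<and> S \<noteq> {} \<and>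
       card S = fst (prod_decode n)}" for n
  define \<F> where "\<F> = (\<Union>n. G n)"
  have closedW: "closedin X (W S k)" if ST: "S \<subseteq> T" for S k
  proof -
    define r where "r = 1 / real (Suc k)"
    have r0: "r > 0" by (simp add: r_def)
    have "openin X (topspace X - W S k)"
    proof (subst openin_subopen, intro ballI)
      fix x assume x: "x \<in> topspace X - W S k"
      hence xt: "x \<in> topspace X" by auto
      have "\<not> (\<forall>s\<in>S. r \<le> f s x \<and> (\<forall>t\<in>T-S. r \<le> f s x - f t x))"
        using x unfolding W_def r_def[symmetric] by blast
      then obtain s where s: "s \<in> S" "f s x < r \<or> (\<exists>t\<in>T-S. f s x - f t x < r)"
        by (auto simp: not_le)
      have sT: "s \<in> T" using s ST by auto
      show "\<exists>V. openin X V \<and> x \<in> V \<and> V \<subseteq> topspace X - W S k"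
      proof (cases "f s x < r")
        case True
        obtain V where V: "openin X V" "x \<in> V"
          "\<And>y t. y\<in>V \<Longrightarrow> t\<in>T \<Longrightarrow> \<bar>f t y - f t x\<bar> < r - f s x"
        proof -
          have e: "0 < r - f s x" using True by simp
          show ?thesis using pou_nbhd[OF P xt e] that by blast
        qed
        have "V \<subseteq> topspace X - W S k"
        proof
          fix y assume y: "y \<in> V"
          have "f s y < r" using V(3)[OF y sT] by linarith
          moreover have "r \<le> f s y" if "y \<in> W S k" using that s(1) unfolding W_def r_def[symmetric] by simp
          ultimately show "y \<in> topspace X - W S k" using y openin_subset[OF V(1)] by (meson DiffI linorder_not_le subsetD)
        qed
        thus ?thesis using V by blast
      next
        case False
        then obtain t where t: "t \<in> T-S" "f s x - f t x < r" using s(2) by blast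
        have tT: "t \<in> T" using t(1) by simp
        obtain V where V: "openin X V" "x \<in> V"
          "\<And>y u. y\<in>V \<Longrightarrow> u\<in>T \<Longrightarrow> \<bar>f u y - f u x\<bar> < (r - (f s x - f t x)) / 4"
        proof -
          have e: "0 < (r - (f s x - f t x)) / 4" using t by simp
          show ?thesis using pou_nbhd[OF P xt e] that by blast
        qed
        have "V \<subseteq> topspace X - W S k"
        proof
          fix y assume y: "y \<in> V"
          have "\<bar>f t y - f t x\<bar> < (r - (f s x - f t x)) / 4" using V(3)[OF y tT] by simp
          moreover have "4 * ((r - (f s x - f t x)) / 4) = r - (f s x - f t x)" by simp
          ultimately have "f s y - f t y < r" using V(3)[OF y sT] t(2) by linarith
          moreover have "r \<le> f s y - f t y" if "y \<in> W S k" using that s(1) t(1) unfolding W_def r_def[symmetric] by simp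
          ultimately show "y \<in> topspace X - W S k" using y openin_subset[OF V(1)] by (meson DiffI linorder_not_le subsetD)
        qed
        thus ?thesis using V by blast
      qed
    qed
    moreover have "W S k \<subseteq> topspace X" by (auto simp: W_def)
    ultimately show ?thesis by (simp add: closedin_def)
  qed
  have smallW: "\<exists>U\<in>\<U>. W S k \<subseteq> U" if ST: "S \<subseteq> T" and Sne: "S \<noteq> {}" for S k
  proof -
    obtain s where s: "s \<in> S" using Sne by auto
    hence sT: "s \<in> T" using ST by auto
    obtain U where U: "U \<in> \<U>" "carrier_pou X (f s) \<subseteq> U"
      using sp sT unfolding small_partition_of_unity_def by blast
    have "W S k \<subseteq> carrier_pou X (f s)"
    proof
      fix x assume "x \<in> W S k"
      hence "x \<in> topspace X" "1 / real (Suc k) \<le> f s x" using s by (auto simp: W_def)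
      moreover have "0 < 1 / real (Suc k)" by simp
      ultimately have "0 < f s x" "x \<in> topspace X" by linarith+
      thus "x \<in> carrier_pou X (f s)" unfolding carrier_pou_def by simp
    qed
    thus ?thesis using U by blast
  qed
  have cover: "\<Union>\<F> = topspace X"
  proof
    have "A \<subseteq> topspace X" if "A \<in> G n" for A n using that unfolding G_def W_def by blast
    thus "\<Union>\<F> \<subseteq> topspace X" unfolding \<F>_def by blast
    show "topspace X \<subseteq> \<Union>\<F>"
    proof
      fix x assume x: "x \<in> topspace X"
      obtain S k where S: "S \<subseteq> T" "finite S" "S \<noteq> {}"
        "\<forall>s\<in>S. 1 / real (Suc k) \<le> f s x \<and> (\<forall>t\<in>T-S. 1 / real (Suc k) \<le> f s x - f t x)"
        using cover_point[OF P x] by blast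
      have "x \<in> W S k" using S(4) x by (simp add: W_def)
      moreover have "W S k \<in> G (prod_encode (card S, k))"
        unfolding G_def prod_encode_inverse fst_conv snd_conv using S(1-3) by blast
      ultimately show "x \<in> \<Union>\<F>" unfolding \<F>_def by blast
    qed
  qed
  have disc: "discrete_collection X (G n)" for n
  proof -
    obtain i k where ik: "prod_decode n = (i, k)" by (cases "prod_decode n")
    let ?r = "1 / real (Suc k)"
    show ?thesis unfolding discrete_collection_def discrete_family_def
    proof (intro ballI)
      fix x0 assume x0: "x0 \<in> topspace X"
      obtain V where V: "openin X V" "x0 \<in> V"
          "\<And>y t. y\<in>V \<Longrightarrow> t\<in>T \<Longrightarrow> \<bar>f t y - f t x0\<bar> < ?r / 4"
      proof -
        have e: "0 < ?r / 4" by simp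
        show ?thesis using pou_nbhd[OF P x0 e] that by blast
      qed
      have "A = B" if A: "A \<in> G n" and B: "B \<in> G n" and AV: "id A \<inter> V \<noteq> {}"
        and BV: "id B \<inter> V \<noteq> {}" for A B
      proof -
        obtain S where S: "A = W S k" "S \<subseteq> T" "finite S" "card S = i"
          using A ik unfolding G_def by auto
        obtain S' where S': "B = W S' k" "S' \<subseteq> T" "finite S'" "card S' = i"
          using B ik unfolding G_def by auto
        show "A = B"
        proof (cases "S = S'")
          case True thus ?thesis using S S' by simp
        next
          case False
          have "\<not> S \<subseteq> S'"
          proof
            assume "S \<subseteq> S'"
            hence "S = S'" using card_subset_eq[OF S'(3)] S(4) S'(4) by auto
            with False show False by simp
          qed
          then obtain s where s: "s \<in> S" "s \<notin> S'" by auto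
          have "\<not> S' \<subseteq> S"
          proof
            assume "S' \<subseteq> S"
            hence "S' = S" using card_subset_eq[OF S(3)] S(4) S'(4) by auto
            with False show False by simp
          qed
          then obtain s' where s': "s' \<in> S'" "s' \<notin> S" by auto
          obtain x where x: "x \<in> W S k" "x \<in> V" using AV S(1) by auto
          obtain y where y: "y \<in> W S' k" "y \<in> V" using BV S'(1) by auto
          have sT: "s \<in> T" and s'T: "s' \<in> T" using s s' S S' by auto
          have 1: "?r \<le> f s x - f s' x" using x(1) s s' s'T unfolding W_def by auto
          have 2: "?r \<le> f s' y - f s y" using y(1) s s' sT unfolding W_def by auto
          have 3: "\<bar>f s x - f s x0\<bar> < ?r/4" "\<bar>f s' x - f s' x0\<bar> < ?r/4"
            "\<bar>f s y - f s x0\<bar> < ?r/4" "\<bar>f s' y - f s' x0\<bar> < ?r/4"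
            using V(3) x(2) y(2) sT s'T by auto
          have False by (rule disc_arith[OF 1 2 3])
          thus ?thesis ..
        qed
      qed
      thus "\<exists>V. openin X V \<and> x0 \<in> V \<and> (\<forall>s\<in>G n. \<forall>t\<in>G n.
              id s \<inter> V \<noteq> {} \<and> id t \<inter> V \<noteq> {} \<longrightarrow> s = t)"
        using V(1,2) by blast
    qed
  qed
  show ?thesis
  proof (intro exI conjI)
    have "\<forall>F\<in>\<F>. closedin X F \<and> (\<exists>U\<in>\<U>. F \<subseteq> U)"
    proof
      fix F assume "F \<in> \<F>"
      then obtain S k where Sk: "F = W S k" "S \<subseteq> T" "S \<noteq> {}" unfolding \<F>_def G_def by auto
      show "closedin X F \<and> (\<exists>U\<in>\<U>. F \<subseteq> U)" using closedW[OF Sk(2)] smallW[OF Sk(2,3)] Sk(1) by simp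
    qed
    thus "closed_refinement X \<F> \<U>" unfolding closed_refinement_def using cover by blast
    show "sigma_discrete X \<F>" unfolding sigma_discrete_def \<F>_def using disc by blast
  qed
qed



definition ecnt :: "'a topology \<Rightarrow> ('a \<Rightarrow> real) \<Rightarrow> bool" where
 "ecnt X h \<longleftrightarrow> (\<forall>x0\<in>topspace X. \<forall>e>0. \<exists>V. openin X V \<and> x0\<in>V \<and> (\<forall>x\<in>V. \<bar>h x - h x0\<bar> < e))"

lemma ecnt_iff: "ecnt X h \<longleftrightarrow> continuous_map X euclideanreal h"
  using Met_TC.continuous_map_to_metric[of X h]
  by (simp add: ecnt_def dist_real_def abs_minus_commute)

locale pcon =
  fixes X :: "'a topology" and \<F> :: "'a set set" and lev :: "'a set \<Rightarrow> nat"
    and Op :: "'a set \<Rightarrow> 'a set" and \<phi> :: "'a set \<Rightarrow> 'a \<Rightarrow> real"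
  assumes A1: "\<And>F. F\<in>\<F> \<Longrightarrow> openin X (Op F) \<and> F \<subseteq> Op F"
  and A2: "\<Union>\<F> = topspace X"
  and A3: "\<And>x0 n. x0\<in>topspace X \<Longrightarrow> \<exists>W. openin X W \<and> x0\<in>W \<and>
      (\<forall>F\<in>\<F>. \<forall>F'\<in>\<F>. lev F = n \<and> lev F' = n \<and> Op F \<inter> W \<noteq> {} \<and> Op F' \<inter> W \<noteq> {} \<longrightarrow> F = F')"
  and A4: "\<And>F. F\<in>\<F> \<Longrightarrow> continuous_map X euclideanreal (\<phi> F) \<and>
      (\<forall>x\<in>topspace X. 0 \<le> \<phi> F x \<and> \<phi> F x \<le> 1) \<and> (\<forall>x\<in>F. \<phi> F x = 1) \<and>
      (\<forall>x\<in>topspace X - Op F. \<phi> F x = 0)"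
begin

definition "Lset n x = {F\<in>\<F>. lev F = n \<and> x \<in> Op F}"
definition "Phi n x = (\<Sum>F\<in>Lset n x. \<phi> F x)"
definition "Pr n x = (\<Prod>m<n. 1 - Phi m x)"
definition "ff F x = \<phi> F x * Pr (lev F) x"

lemma O_sub: "F\<in>\<F> \<Longrightarrow> Op F \<subseteq> topspace X"
  using A1 openin_subset by blast

lemma K1: assumes "F\<in>\<F>" "F'\<in>\<F>" "lev F = lev F'" "x \<in> Op F" "x \<in> Op F'" shows "F = F'"
proof -
  have x: "x \<in> topspace X" using O_sub assms by blast
  obtain W where W: "openin X W" "x\<in>W"
    "\<forall>G\<in>\<F>. \<forall>G'\<in>\<F>. lev G = lev F \<and> lev G' = lev F \<and> Op G \<inter> W \<noteq> {} \<and> Op G' \<inter> W \<noteq> {} \<longrightarrow> G = G'"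
    using A3[OF x, of "lev F"] by blast
  have "x \<in> Op F \<inter> W" "x \<in> Op F' \<inter> W" using W(2) assms by auto
  hence c: "lev F = lev F \<and> lev F' = lev F \<and> Op F \<inter> W \<noteq> {} \<and> Op F' \<inter> W \<noteq> {}" using assms(3) by auto
  show ?thesis using W(3) assms(1,2) c by blast
qed

lemma Lset_sing: assumes "F\<in>\<F>" "x \<in> Op F" shows "Lset (lev F) x = {F}"
proof
  show "{F} \<subseteq> Lset (lev F) x" using assms by (simp add: Lset_def)
  show "Lset (lev F) x \<subseteq> {F}"
  proof
    fix G assume "G \<in> Lset (lev F) x"
    hence "G \<in> \<F>" "lev G = lev F" "x \<in> Op G" by (auto simp: Lset_def)
    thus "G \<in> {F}" using K1[OF _ assms(1) _ _ assms(2)] by simp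
  qed
qed

lemma Phi_eq: "F\<in>\<F> \<Longrightarrow> x \<in> Op F \<Longrightarrow> Phi (lev F) x = \<phi> F x"
  by (simp add: Phi_def Lset_sing)

lemma Lset_cases: "Lset n x = {} \<or> (\<exists>F\<in>\<F>. lev F = n \<and> x \<in> Op F \<and> Lset n x = {F})"
proof (cases "Lset n x = {}")
  case False
  then obtain F where "F \<in> Lset n x" by blast
  hence "F\<in>\<F>" "lev F = n" "x \<in> Op F" by (auto simp: Lset_def)
  thus ?thesis using Lset_sing by blast
qed simp

lemma phi_zero: "F\<in>\<F> \<Longrightarrow> x \<in> topspace X \<Longrightarrow> x \<notin> Op F \<Longrightarrow> \<phi> F x = 0"
  using A4 by blast

lemma phi_bounds: "F\<in>\<F> \<Longrightarrow> x \<in> topspace X \<Longrightarrow> 0 \<le> \<phi> F x \<and> \<phi> F x \<le> 1"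
  using A4 by blast

lemma Phi_bounds: "x \<in> topspace X \<Longrightarrow> 0 \<le> Phi n x \<and> Phi n x \<le> 1"
  using Lset_cases[of n x] phi_bounds by (auto simp: Phi_def)

lemma Phi_cont: "continuous_map X euclideanreal (Phi n)"
  unfolding ecnt_iff[symmetric] ecnt_def
proof (intro ballI allI impI)
  fix x0 e assume x0: "x0 \<in> topspace X" and e: "(0::real) < e"
  obtain W where W: "openin X W" "x0\<in>W"
      "\<forall>F\<in>\<F>. \<forall>F'\<in>\<F>. lev F = n \<and> lev F' = n \<and> Op F \<inter> W \<noteq> {} \<and> Op F' \<inter> W \<noteq> {} \<longrightarrow> F = F'"
    using A3[OF x0, of n] by blast
  have Wt: "W \<subseteq> topspace X" using W(1) openin_subset by blast
  show "\<exists>V. openin X V \<and> x0 \<in> V \<and> (\<forall>x\<in>V. \<bar>Phi n x - Phi n x0\<bar> < e)"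
  proof (cases "\<exists>F\<in>\<F>. lev F = n \<and> Op F \<inter> W \<noteq> {}")
    case True
    then obtain F where F: "F\<in>\<F>" "lev F = n" "Op F \<inter> W \<noteq> {}" by blast
    have agree: "Phi n y = \<phi> F y" if y: "y \<in> W" for y
    proof (cases "y \<in> Op F")
      case True thus ?thesis using Phi_eq[OF F(1) True] F(2) by simp
    next
      case False
      have "Lset n y = {}"
      proof (rule ccontr)
        assume "Lset n y \<noteq> {}"
        then obtain G where "G\<in>\<F>" "lev G = n" "y \<in> Op G" unfolding Lset_def by blast
        hence "G = F" using W(3) F y by blast
        thus False using False \<open>y \<in> Op G\<close> by simp
      qed
      hence "Phi n y = 0" by (simp add: Phi_def)
      moreover have "\<phi> F y = 0" using phi_zero[OF F(1) _ False] y Wt by blast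
      ultimately show ?thesis by simp
    qed
    have "ecnt X (\<phi> F)" using A4[OF F(1)] ecnt_iff by blast
    then obtain V where V: "openin X V" "x0\<in>V" "\<forall>x\<in>V. \<bar>\<phi> F x - \<phi> F x0\<bar> < e"
      using x0 e unfolding ecnt_def by blast
    show ?thesis
      by (rule exI[of _ "V \<inter> W"]) (use V W agree in auto)
  next
    case False
    have "Phi n y = 0" if y: "y \<in> W" for y
    proof -
      have "Lset n y = {}" using False y unfolding Lset_def by blast
      thus ?thesis by (simp add: Phi_def)
    qed
    thus ?thesis using W e by (intro exI[of _ W]) auto
  qed
qed

lemma Pr_cont: "continuous_map X euclideanreal (Pr n)"
  unfolding Pr_def by (intro continuous_map_prod continuous_map_diff continuous_map_const[THEN iffD2] Phi_cont) auto

lemma Pr_bounds: "x \<in> topspace X \<Longrightarrow> 0 \<le> Pr n x \<and> Pr n x \<le> 1"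
  unfolding Pr_def using Phi_bounds
  by (auto intro!: prod_nonneg prod_le_1)

lemma ff_cont: "F\<in>\<F> \<Longrightarrow> continuous_map X euclideanreal (ff F)"
  unfolding ff_def using A4 Pr_cont by (intro continuous_map_real_mult) auto

lemma ff_bounds: "F\<in>\<F> \<Longrightarrow> x \<in> topspace X \<Longrightarrow> 0 \<le> ff F x \<and> ff F x \<le> 1"
  unfolding ff_def using phi_bounds[of F x] Pr_bounds[of x "lev F"]
  by (auto intro: mult_le_one)

lemma ff_nz: "F\<in>\<F> \<Longrightarrow> x \<in> topspace X \<Longrightarrow> ff F x \<noteq> 0 \<Longrightarrow> x \<in> Op F"
  unfolding ff_def using phi_zero by force

lemma tele: "a \<le> b \<Longrightarrow> (\<Sum>n\<in>{a..<b}. Phi n x * Pr n x) = Pr a x - Pr b x"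
proof (induction b)
  case 0 thus ?case by simp
next
  case (Suc b)
  show ?case
  proof (cases "a \<le> b")
    case True
    have "Pr (Suc b) x = Pr b x * (1 - Phi b x)" by (simp add: Pr_def)
    thus ?thesis using Suc True by (simp add: algebra_simps)
  next
    case False
    hence "a = Suc b" using Suc by simp
    thus ?thesis by simp
  qed
qed

lemma point_level:
  assumes x: "x \<in> topspace X"
  obtains k where "\<And>n. k < n \<Longrightarrow> Pr n x = 0"
proof -
  obtain F0 where F0: "F0 \<in> \<F>" "x \<in> F0" using A2 x by blast
  have "x \<in> Op F0" using A1[OF F0(1)] F0(2) by blast
  hence "Phi (lev F0) x = 1" using Phi_eq[OF F0(1)] A4[OF F0(1)] F0(2) by simp
  hence "Pr n x = 0" if "lev F0 < n" for n
    unfolding Pr_def using that by (intro prod_zero) (auto intro!: bexI[of _ "lev F0"])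
  thus ?thesis using that by blast
qed

lemma reindex:
  assumes x: "x \<in> topspace X" and A: "A \<subseteq> \<F>" "\<forall>F\<in>A. x \<in> Op F"
  shows "(\<Sum>F\<in>A. ff F x) = (\<Sum>n\<in>lev ` A. Phi n x * Pr n x)"
proof -
  have inj: "inj_on lev A" unfolding inj_on_def using K1 A by blast
  have "(\<Sum>n\<in>lev ` A. Phi n x * Pr n x) = (\<Sum>F\<in>A. Phi (lev F) x * Pr (lev F) x)"
    by (rule sum.reindex[OF inj, unfolded comp_def])
  also have "\<dots> = (\<Sum>F\<in>A. ff F x)"
    by (rule sum.cong) (use A Phi_eq in \<open>auto simp: ff_def\<close>)
  finally show ?thesis by simp
qed


definition "E k x = {F\<in>\<F>. x \<in> Op F \<and> lev F \<le> k}"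

lemma E_inj: "inj_on lev (E k x)"
  unfolding inj_on_def E_def using K1 by blast

lemma E_finite: "finite (E k x)"
  by (rule inj_on_finite[OF E_inj, where B="{..k}"]) (auto simp: E_def)

lemma PhiPr_nonneg: "x \<in> topspace X \<Longrightarrow> 0 \<le> Phi n x * Pr n x"
  using Phi_bounds Pr_bounds by simp

lemma supp:
  assumes x: "x \<in> topspace X" and k: "\<And>n. k < n \<Longrightarrow> Pr n x = 0" and F: "F\<in>\<F>" and nz: "ff F x \<noteq> 0"
  shows "F \<in> E k x"
proof -
  have "x \<in> Op F" using ff_nz[OF F x nz] .
  moreover have "lev F \<le> k"
  proof (rule ccontr)
    assume "\<not> lev F \<le> k"
    hence "Pr (lev F) x = 0" using k by simp
    thus False using nz by (simp add: ff_def)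
  qed
  ultimately show ?thesis using F by (simp add: E_def)
qed

lemma sum_one:
  assumes x: "x \<in> topspace X" and k: "\<And>n. k < n \<Longrightarrow> Pr n x = 0"
  shows "(\<Sum>F\<in>E k x. ff F x) = 1"
proof -
  have "(\<Sum>F\<in>E k x. ff F x) = (\<Sum>n\<in>lev ` E k x. Phi n x * Pr n x)"
    by (rule reindex[OF x]) (auto simp: E_def)
  also have "\<dots> = (\<Sum>n\<in>{0..<Suc k}. Phi n x * Pr n x)"
  proof (rule sum.mono_neutral_left)
    show "lev ` E k x \<subseteq> {0..<Suc k}" by (auto simp: E_def)
    show "\<forall>n\<in>{0..<Suc k} - lev ` E k x. Phi n x * Pr n x = 0"
    proof
      fix n assume n: "n \<in> {0..<Suc k} - lev ` E k x"
      have "Lset n x = {}"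
      proof (rule ccontr)
        assume "Lset n x \<noteq> {}"
        then obtain F where "F \<in> \<F>" "lev F = n" "x \<in> Op F" unfolding Lset_def by blast
        hence "F \<in> E k x" using n by (auto simp: E_def)
        thus False using n \<open>lev F = n\<close> by blast
      qed
      thus "Phi n x * Pr n x = 0" by (simp add: Phi_def)
    qed
  qed simp
  also have "\<dots> = Pr 0 x - Pr (Suc k) x" by (rule tele) simp
  also have "\<dots> = 1" using k[of "Suc k"] by (simp add: Pr_def)
  finally show ?thesis .
qed

lemma has_sum_one:
  assumes x: "x \<in> topspace X"
  shows "((\<lambda>F. ff F x) has_sum 1) \<F>"
proof -
  obtain k where k: "\<And>n. k < n \<Longrightarrow> Pr n x = 0" using point_level[OF x] by blast
  show ?thesis
  proof (rule has_sum_finite_neutralI[of "E k x"])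
    show "finite (E k x)" by (rule E_finite)
    show "E k x \<subseteq> \<F>" by (auto simp: E_def)
    show "\<And>F. F \<in> \<F> - E k x \<Longrightarrow> ff F x = 0" using supp[OF x k] by blast
    show "1 = (\<Sum>F\<in>E k x. ff F x)" using sum_one[OF x k] by simp
  qed
qed


lemma l1_cont:
  assumes x0: "x0 \<in> topspace X" and e: "e > 0"
  shows "\<exists>V. openin X V \<and> x0 \<in> V \<and> (\<forall>x\<in>V. l1_dist \<F> ff x x0 < e)"
proof -
  obtain k where k: "\<And>n. k < n \<Longrightarrow> Pr n x0 = 0" using point_level[OF x0] by blast
  have "\<forall>n. \<exists>W. openin X W \<and> x0\<in>W \<and>
      (\<forall>F\<in>\<F>. \<forall>F'\<in>\<F>. lev F = n \<and> lev F' = n \<and> Op F \<inter> W \<noteq> {} \<and> Op F' \<inter> W \<noteq> {} \<longrightarrow> F = F')"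
    using A3[OF x0] by blast
  then obtain Wf where Wf: "\<And>n. openin X (Wf n)" "\<And>n. x0 \<in> Wf n"
    "\<And>n. \<forall>F\<in>\<F>. \<forall>F'\<in>\<F>. lev F = n \<and> lev F' = n \<and> Op F \<inter> Wf n \<noteq> {} \<and> Op F' \<inter> Wf n \<noteq> {} \<longrightarrow> F = F'"
    by metis
  define V0 where "V0 = \<Inter> (Wf ` {..k})"
  have V0: "openin X V0" "x0 \<in> V0" unfolding V0_def using Wf(1,2) by auto
  define C where "C = {F\<in>\<F>. lev F \<le> k \<and> Op F \<inter> V0 \<noteq> {}}"
  have injC: "inj_on lev C"
  proof (rule inj_onI)
    fix F F' assume F: "F \<in> C" "F' \<in> C" "lev F = lev F'"
    have "Op F \<inter> Wf (lev F) \<noteq> {}" "Op F' \<inter> Wf (lev F) \<noteq> {}"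
      using F unfolding C_def V0_def by auto
    thus "F = F'" using Wf(3)[of "lev F"] F unfolding C_def by auto
  qed
  have fC: "finite C" by (rule inj_on_finite[OF injC, where B="{..k}"]) (auto simp: C_def)
  have cC: "card C \<le> Suc k" using card_inj_on_le[OF injC, where B="{..k}"] by (auto simp: C_def)
  define \<delta> where "\<delta> = e / (2 * real (Suc k))"
  have \<delta>: "\<delta> > 0" using e by (simp add: \<delta>_def)
  have "\<forall>F\<in>C. \<exists>V. openin X V \<and> x0 \<in> V \<and> (\<forall>x\<in>V. \<bar>ff F x - ff F x0\<bar> < \<delta>)"
  proof
    fix F assume "F \<in> C"
    hence "ecnt X (ff F)" using ff_cont ecnt_iff by (auto simp: C_def)
    thus "\<exists>V. openin X V \<and> x0 \<in> V \<and> (\<forall>x\<in>V. \<bar>ff F x - ff F x0\<bar> < \<delta>)"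
      using x0 \<delta> unfolding ecnt_def by blast
  qed
  then obtain VF where VF: "\<And>F. F\<in>C \<Longrightarrow> openin X (VF F) \<and> x0 \<in> VF F \<and> (\<forall>x\<in>VF F. \<bar>ff F x - ff F x0\<bar> < \<delta>)"
    by metis
  define V1 where "V1 = \<Inter> (insert (topspace X) (VF ` C))"
  have V1: "openin X V1" unfolding V1_def by (rule openin_Inter) (use VF fC in auto)
  have V1': "x0 \<in> V1" unfolding V1_def using VF x0 by auto
  have "ecnt X (Pr (Suc k))" using Pr_cont ecnt_iff by blast
  then obtain V2 where V2: "openin X V2" "x0 \<in> V2" "\<forall>x\<in>V2. \<bar>Pr (Suc k) x - Pr (Suc k) x0\<bar> < e/2"
    using x0 e unfolding ecnt_def by (meson half_gt_zero)
  have P0: "Pr (Suc k) x0 = 0" using k by simp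
  show ?thesis
  proof (intro exI conjI ballI)
    show "openin X (V0 \<inter> V1 \<inter> V2)" using V0 V1 V2 by auto
    show "x0 \<in> V0 \<inter> V1 \<inter> V2" using V0 V1' V2 by auto
    fix x assume xV: "x \<in> V0 \<inter> V1 \<inter> V2"
    have x: "x \<in> topspace X" using xV V1_def by auto
    obtain kx where kx: "\<And>n. kx < n \<Longrightarrow> Pr n x = 0" using point_level[OF x] by blast
    define K where "K = max k kx"
    have kK: "\<And>n. K < n \<Longrightarrow> Pr n x = 0" "\<And>n. K < n \<Longrightarrow> Pr n x0 = 0"
      using k kx by (auto simp: K_def)
    define h where "h F = \<bar>ff F x - ff F x0\<bar>" for F
    define D where "D = E K x \<union> E K x0"
    have fD: "finite D" using E_finite by (simp add: D_def)
    have DF: "D \<subseteq> \<F>" by (auto simp: D_def E_def)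
    have hz: "h F = 0" if "F \<in> \<F> - D" for F
    proof -
      have "ff F x = 0" using supp[OF x kK(1)] that by (auto simp: D_def)
      moreover have "ff F x0 = 0" using supp[OF x0 kK(2)] that by (auto simp: D_def)
      ultimately show ?thesis by (simp add: h_def)
    qed
    have "l1_dist \<F> ff x x0 = infsum h \<F>" unfolding l1_dist_def h_def by (rule refl)
    also have "\<dots> = infsum h D"
      by (rule infsum_cong_neutral) (use hz DF in auto)
    also have "\<dots> = sum h D" using fD by simp
    also have "\<dots> = sum h (D \<inter> {F. lev F \<le> k}) + sum h (D - {F. lev F \<le> k})"
      by (rule sum.Int_Diff[OF fD])
    finally have split: "l1_dist \<F> ff x x0 = sum h (D \<inter> {F. lev F \<le> k}) + sum h (D - {F. lev F \<le> k})" .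
    have part1: "sum h (D \<inter> {F. lev F \<le> k}) \<le> e/2"
    proof -
      have sub: "D \<inter> {F. lev F \<le> k} \<subseteq> C"
      proof
        fix F assume F: "F \<in> D \<inter> {F. lev F \<le> k}"
        have "x \<in> V0" "x0 \<in> V0" using xV V0 by auto
        hence "Op F \<inter> V0 \<noteq> {}" using F unfolding D_def E_def by blast
        thus "F \<in> C" using F DF by (auto simp: C_def)
      qed
      have "sum h (D \<inter> {F. lev F \<le> k}) \<le> sum h C"
        by (rule sum_mono2[OF fC sub]) (simp add: h_def)
      also have "\<dots> \<le> sum (\<lambda>_. \<delta>) C"
      proof (rule sum_mono)
        fix F assume F: "F \<in> C"
        have "x \<in> VF F" using xV F unfolding V1_def by auto
        thus "h F \<le> \<delta>" using VF[OF F] by (auto simp: h_def intro: less_imp_le)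
      qed
      also have "\<dots> = real (card C) * \<delta>" by simp
      also have "\<dots> \<le> real (Suc k) * \<delta>" using cC \<delta> by (intro mult_right_mono) auto
      also have "\<dots> = e/2" unfolding \<delta>_def by (simp add: field_simps)
      finally show ?thesis .
    qed
    have part2: "sum h (D - {F. lev F \<le> k}) < e/2"
    proof -
      define A' where "A' = {F \<in> D - {F. lev F \<le> k}. x \<in> Op F}"
      have "sum h (D - {F. lev F \<le> k}) = sum (\<lambda>F. ff F x) (D - {F. lev F \<le> k})"
      proof (rule sum.cong)
        fix F assume F: "F \<in> D - {F. lev F \<le> k}"
        hence "ff F x0 = 0" using k DF by (auto simp: ff_def)
        thus "h F = ff F x" using ff_bounds[of F x] F DF x by (auto simp: h_def)
      qed simp
      also have "\<dots> = sum (\<lambda>F. ff F x) A'"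
      proof (rule sum.mono_neutral_right)
        show "finite (D - {F. lev F \<le> k})" using fD by simp
        show "A' \<subseteq> D - {F. lev F \<le> k}" by (auto simp: A'_def)
        show "\<forall>F\<in>D - {F. lev F \<le> k} - A'. ff F x = 0"
          using ff_nz DF x by (auto simp: A'_def)
      qed
      also have "\<dots> = (\<Sum>n\<in>lev ` A'. Phi n x * Pr n x)"
        by (rule reindex[OF x]) (use DF in \<open>auto simp: A'_def\<close>)
      also have "\<dots> \<le> (\<Sum>n\<in>{Suc k..<Suc K}. Phi n x * Pr n x)"
      proof (rule sum_mono2)
        show "lev ` A' \<subseteq> {Suc k..<Suc K}"
        proof
          fix n assume "n \<in> lev ` A'"
          then obtain F where F: "F \<in> A'" "n = lev F" by blast
          hence "F \<in> D" "\<not> lev F \<le> k" by (auto simp: A'_def)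
          moreover have "lev F \<le> K" using \<open>F \<in> D\<close> by (auto simp: D_def E_def)
          ultimately show "n \<in> {Suc k..<Suc K}" using F by auto
        qed
      qed (use PhiPr_nonneg[OF x] in auto)
      also have "\<dots> = Pr (Suc k) x - Pr (Suc K) x" by (rule tele) (simp add: K_def)
      also have "\<dots> \<le> Pr (Suc k) x" using Pr_bounds[OF x] by simp
      also have "\<dots> < e/2" using V2(3) xV P0 by auto
      finally show ?thesis .
    qed
    show "l1_dist \<F> ff x x0 < e" using split part1 part2 by linarith
  qed
qed

lemma pou:
  assumes ne: "topspace X \<noteq> {}"
  shows "partition_of_unity X \<F> ff" "\<And>F. F\<in>\<F> \<Longrightarrow> carrier_pou X (ff F) \<subseteq> Op F"
proof -
  show "partition_of_unity X \<F> ff"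
    unfolding partition_of_unity_def
  proof (intro conjI ballI allI impI)
    show "\<F> \<noteq> {}" by (metis A2 Union_empty ne)
  qed (use ff_bounds has_sum_one l1_cont in auto)
  fix F assume F: "F \<in> \<F>"
  show "carrier_pou X (ff F) \<subseteq> Op F" using ff_nz[OF F] by (auto simp: carrier_pou_def)
qed

end

lemma disc_mono: "discrete_collection X G \<Longrightarrow> H \<subseteq> G \<Longrightarrow> discrete_collection X H"
  unfolding discrete_collection_def discrete_family_def by (meson subsetD)

lemma cwn_normal:
  assumes cwn: "collectionwise_normal X"
  shows "normal_space X"
  unfolding normal_space_def
proof (intro allI impI)
  fix S T assume H: "closedin X S \<and> closedin X T \<and> disjnt S T"
  show "\<exists>U V. openin X U \<and> openin X V \<and> S \<subseteq> U \<and> T \<subseteq> V \<and> disjnt U V"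
  proof (cases "S = T")
    case True
    hence "S = {}" "T = {}" using H by (auto simp: disjnt_def)
    thus ?thesis by (intro exI[of _ "{}"]) auto
  next
    case False
    define \<A> where "\<A> = {S, T}"
    have cl: "\<forall>A\<in>\<A>. closedin X A" using H by (auto simp: \<A>_def)
    have dc: "discrete_collection X \<A>"
      unfolding discrete_collection_def discrete_family_def
    proof
      fix x assume x: "x \<in> topspace X"
      show "\<exists>V. openin X V \<and> x \<in> V \<and> (\<forall>s\<in>\<A>. \<forall>t\<in>\<A>. id s \<inter> V \<noteq> {} \<and> id t \<inter> V \<noteq> {} \<longrightarrow> s = t)"
      proof (cases "x \<in> S")
        case True
        hence "x \<notin> T" using H by (auto simp: disjnt_def)
        moreover have "openin X (topspace X - T)" using H by blast
        moreover have "\<forall>s\<in>\<A>. s \<inter> (topspace X - T) \<noteq> {} \<longrightarrow> s = S" unfolding \<A>_def by blast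
        ultimately show ?thesis using x by (metis Diff_iff id_apply)
      next
        case False
        moreover have "openin X (topspace X - S)" using H by blast
        moreover have "\<forall>s\<in>\<A>. s \<inter> (topspace X - S) \<noteq> {} \<longrightarrow> s = T" unfolding \<A>_def by blast
        ultimately show ?thesis using x by (metis Diff_iff id_apply)
      qed
    qed
    obtain U where U: "\<forall>A\<in>\<A>. openin X (U A) \<and> A \<subseteq> U A" "discrete_family X \<A> U"
      using cwn[unfolded collectionwise_normal_def, THEN conjunct2, rule_format, of \<A>] cl dc by blast
    have "disjnt (U S) (U T)"
    proof (rule ccontr)
      assume "\<not> disjnt (U S) (U T)"
      then obtain z where z: "z \<in> U S" "z \<in> U T" by (auto simp: disjnt_def)
      have SA: "S \<in> \<A>" and TA: "T \<in> \<A>" by (simp_all add: \<A>_def)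
      have "openin X (U S)" using bspec[OF U(1) SA] by simp
      hence zt: "z \<in> topspace X" using openin_subset z(1) by blast
      obtain V where V: "openin X V" "z \<in> V"
        "\<forall>s\<in>\<A>. \<forall>t\<in>\<A>. U s \<inter> V \<noteq> {} \<and> U t \<inter> V \<noteq> {} \<longrightarrow> s = t"
        using bspec[OF U(2)[unfolded discrete_family_def] zt] by blast
      have "U S \<inter> V \<noteq> {} \<and> U T \<inter> V \<noteq> {}" using z V(2) by auto
      hence "S = T" using bspec[OF bspec[OF V(3) SA] TA] by simp
      thus False using False by simp
    qed
    moreover have "openin X (U S) \<and> S \<subseteq> U S" "openin X (U T) \<and> T \<subseteq> U T"
      using U(1) unfolding \<A>_def by simp_all
    ultimately show ?thesis by blast
  qed
qed

lemma dir2: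
  fixes X :: "'a topology"
  assumes cwn: "collectionwise_normal X" and oc: "open_cover X \<U>" and ne: "topspace X \<noteq> {}"
    and cr: "closed_refinement X \<F> \<U>" and sd: "sigma_discrete X \<F>"
  shows "\<exists>(T::'a set set) f. small_partition_of_unity X \<U> T f"
proof -
  obtain G :: "nat \<Rightarrow> 'a set set" where G: "\<F> = (\<Union>n. G n)" "\<And>n. discrete_collection X (G n)"
    using sd unfolding sigma_discrete_def by metis
  define lev where "lev F = (LEAST n. F \<in> G n)" for F
  have levG: "F \<in> G (lev F)" if "F \<in> \<F>" for F
  proof -
    have "\<exists>n. F \<in> G n" using that G(1) by blast
    thus ?thesis unfolding lev_def by (rule LeastI_ex)
  qed
  define L where "L n = {F\<in>\<F>. lev F = n}" for n
  have Ldisc: "discrete_collection X (L n)" for n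
  proof (rule disc_mono[OF G(2)[of n]])
    show "L n \<subseteq> G n"
    proof
      fix F assume "F \<in> L n"
      hence "F \<in> \<F>" "lev F = n" by (simp_all add: L_def)
      thus "F \<in> G n" using levG by blast
    qed
  qed
  have cr1: "\<forall>F\<in>\<F>. closedin X F \<and> (\<exists>U\<in>\<U>. F \<subseteq> U)"
    using cr unfolding closed_refinement_def by (rule conjunct1)
  have Fcl: "\<And>F. F\<in>\<F> \<Longrightarrow> closedin X F" and FU: "\<And>F. F\<in>\<F> \<Longrightarrow> \<exists>U\<in>\<U>. F \<subseteq> U"
    using cr1 by blast+
  have cwn2: "\<And>\<A>. (\<forall>A\<in>\<A>. closedin X A) \<Longrightarrow> discrete_collection X \<A> \<Longrightarrow>
        (\<exists>U. (\<forall>A\<in>\<A>. openin X (U A) \<and> A \<subseteq> U A) \<and> discrete_family X \<A> U)"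
    using cwn unfolding collectionwise_normal_def by blast
  have "\<forall>n. \<exists>Ob. (\<forall>A\<in>L n. openin X (Ob A) \<and> A \<subseteq> Ob A) \<and> discrete_family X (L n) Ob"
  proof
    fix n
    have "\<forall>A\<in>L n. closedin X A" unfolding L_def using Fcl by blast
    thus "\<exists>Ob. (\<forall>A\<in>L n. openin X (Ob A) \<and> A \<subseteq> Ob A) \<and> discrete_family X (L n) Ob"
      by (rule cwn2[OF _ Ldisc])
  qed
  then have "\<exists>Ob. \<forall>n. (\<forall>A\<in>L n. openin X (Ob n A) \<and> A \<subseteq> Ob n A) \<and> discrete_family X (L n) (Ob n)"
    by (rule choice)
  then obtain Ob where Ob0: "\<forall>n. (\<forall>A\<in>L n. openin X (Ob n A) \<and> A \<subseteq> Ob n A) \<and> discrete_family X (L n) (Ob n)"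
    by (elim exE)
  have Ob: "\<And>n. \<forall>A\<in>L n. openin X (Ob n A) \<and> A \<subseteq> Ob n A"
    "\<And>n. discrete_family X (L n) (Ob n)" using Ob0 by blast+
  have "\<forall>F\<in>\<F>. \<exists>U. U \<in> \<U> \<and> F \<subseteq> U" using FU by blast
  then have "\<exists>Uf. \<forall>F\<in>\<F>. Uf F \<in> \<U> \<and> F \<subseteq> Uf F" by (rule bchoice)
  then obtain Uf where Uf0: "\<forall>F\<in>\<F>. Uf F \<in> \<U> \<and> F \<subseteq> Uf F" by (elim exE)
  have Uf: "\<And>F. F\<in>\<F> \<Longrightarrow> Uf F \<in> \<U> \<and> F \<subseteq> Uf F" using Uf0 by blast
  define Op where "Op F = Ob (lev F) F \<inter> Uf F" for F
  have A1: "openin X (Op F) \<and> F \<subseteq> Op F" if F: "F\<in>\<F>" for F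
  proof -
    have "F \<in> L (lev F)" using F by (simp add: L_def)
    hence "openin X (Ob (lev F) F)" "F \<subseteq> Ob (lev F) F" using Ob(1) by blast+
    moreover have "openin X (Uf F)" "F \<subseteq> Uf F" using Uf[OF F] oc unfolding open_cover_def by auto
    ultimately show ?thesis unfolding Op_def by auto
  qed
  have A2: "\<Union>\<F> = topspace X" using cr unfolding closed_refinement_def by (rule conjunct2)
  have A3: "\<exists>W. openin X W \<and> x0\<in>W \<and>
      (\<forall>F\<in>\<F>. \<forall>F'\<in>\<F>. lev F = n \<and> lev F' = n \<and> Op F \<inter> W \<noteq> {} \<and> Op F' \<inter> W \<noteq> {} \<longrightarrow> F = F')"
    if x0: "x0\<in>topspace X" for x0 n
  proof -
    obtain V where V: "openin X V" "x0 \<in> V"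
      "\<forall>s\<in>L n. \<forall>t\<in>L n. Ob n s \<inter> V \<noteq> {} \<and> Ob n t \<inter> V \<noteq> {} \<longrightarrow> s = t"
      using bspec[OF Ob(2)[of n, unfolded discrete_family_def] x0] by blast
    have "F = F'" if "F\<in>\<F>" "F'\<in>\<F>" "lev F = n" "lev F' = n" "Op F \<inter> V \<noteq> {}" "Op F' \<inter> V \<noteq> {}" for F F'
    proof -
      have "F \<in> L n" "F' \<in> L n" using that by (auto simp: L_def)
      moreover have "Ob n F \<inter> V \<noteq> {}" "Ob n F' \<inter> V \<noteq> {}" using that unfolding Op_def by auto
      ultimately show ?thesis using bspec[OF bspec[OF V(3) \<open>F \<in> L n\<close>] \<open>F' \<in> L n\<close>] by blast
    qed
    hence "\<forall>F\<in>\<F>. \<forall>F'\<in>\<F>. lev F = n \<and> lev F' = n \<and> Op F \<inter> V \<noteq> {} \<and> Op F' \<inter> V \<noteq> {} \<longrightarrow> F = F'"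
      by blast
    thus ?thesis using V(1,2) by blast
  qed
  have nX: "normal_space X" by (rule cwn_normal[OF cwn])
  have "\<forall>F\<in>\<F>. \<exists>\<phi>. continuous_map X euclideanreal \<phi> \<and>
      (\<forall>x\<in>topspace X. 0 \<le> \<phi> x \<and> \<phi> x \<le> 1) \<and> (\<forall>x\<in>F. \<phi> x = 1) \<and>
      (\<forall>x\<in>topspace X - Op F. \<phi> x = 0)"
  proof
    fix F assume F: "F \<in> \<F>"
    have c1: "closedin X (topspace X - Op F)" using A1[OF F] closedin_topspace closedin_diff by blast
    have d: "disjnt (topspace X - Op F) F" using A1[OF F] by (auto simp: disjnt_def)
    obtain \<phi> where \<phi>: "continuous_map X (top_of_set {0..1::real}) \<phi>" "\<phi> ` (topspace X - Op F) \<subseteq> {0}" "\<phi> ` F \<subseteq> {1}"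
      using Urysohn_lemma[OF nX c1 Fcl[OF F] d zero_le_one] by blast
    have c: "continuous_map X euclideanreal \<phi> \<and> \<phi> \<in> topspace X \<rightarrow> {0..1}"
      by (rule continuous_map_in_subtopology[THEN iffD1, OF \<phi>(1)])
    have b: "\<forall>x\<in>topspace X. 0 \<le> \<phi> x \<and> \<phi> x \<le> 1"
    proof
      fix x assume "x \<in> topspace X"
      hence "\<phi> x \<in> {0..1}" using c by (simp add: Pi_iff)
      thus "0 \<le> \<phi> x \<and> \<phi> x \<le> 1" by simp
    qed
    have o: "\<forall>x\<in>F. \<phi> x = 1" using \<phi>(3) by (simp add: image_subset_iff)
    have z: "\<forall>x\<in>topspace X - Op F. \<phi> x = 0" using \<phi>(2) by (simp add: image_subset_iff)
    show "\<exists>\<phi>. continuous_map X euclideanreal \<phi> \<and>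
      (\<forall>x\<in>topspace X. 0 \<le> \<phi> x \<and> \<phi> x \<le> 1) \<and> (\<forall>x\<in>F. \<phi> x = 1) \<and>
      (\<forall>x\<in>topspace X - Op F. \<phi> x = 0)"
      using c b o z by (intro exI[of _ \<phi>]) simp
  qed
  then have "\<exists>\<phi>. \<forall>F\<in>\<F>. continuous_map X euclideanreal (\<phi> F) \<and>
      (\<forall>x\<in>topspace X. 0 \<le> \<phi> F x \<and> \<phi> F x \<le> 1) \<and> (\<forall>x\<in>F. \<phi> F x = 1) \<and>
      (\<forall>x\<in>topspace X - Op F. \<phi> F x = 0)" by (rule bchoice)
  then obtain \<phi> where A40: "\<forall>F\<in>\<F>. continuous_map X euclideanreal (\<phi> F) \<and>
      (\<forall>x\<in>topspace X. 0 \<le> \<phi> F x \<and> \<phi> F x \<le> 1) \<and> (\<forall>x\<in>F. \<phi> F x = 1) \<and>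
      (\<forall>x\<in>topspace X - Op F. \<phi> F x = 0)" by (elim exE)
  note A4 = bspec[OF A40]
  interpret P: pcon X \<F> lev Op \<phi>
    by unfold_locales (use A1 A2 A3 A4 in auto)
  have "small_partition_of_unity X \<U> \<F> P.ff"
    unfolding small_partition_of_unity_def
  proof (intro conjI ballI)
    show "partition_of_unity X \<F> P.ff" by (rule P.pou(1)[OF ne])
    fix F assume F: "F \<in> \<F>"
    have "carrier_pou X (P.ff F) \<subseteq> Uf F" using P.pou(2)[OF ne F] Op_def by auto
    thus "\<exists>U\<in>\<U>. carrier_pou X (P.ff F) \<subseteq> U" using Uf[OF F] by blast
  qed
  thus ?thesis by blast
qed


theorem corollary4p2:
  fixes X :: "'a topology" and \<U> :: "'a set set"
  assumes "collectionwise_normal X" and "open_cover X \<U>" and "topspace X \<noteq> {}"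
  shows "((\<exists>(T::'i set) f. small_partition_of_unity X \<U> T f) \<longrightarrow>
            (\<exists>\<F>. closed_refinement X \<F> \<U> \<and> sigma_discrete X \<F>))
       \<and> ((\<exists>\<F>. closed_refinement X \<F> \<U> \<and> sigma_discrete X \<F>) \<longrightarrow>
            (\<exists>(T::'a set set) f. small_partition_of_unity X \<U> T f))"
proof (intro conjI impI)
  assume "\<exists>(T::'i set) f. small_partition_of_unity X \<U> T f"
  then obtain T :: "'i set" and f where "small_partition_of_unity X \<U> T f" by blast
  thus "\<exists>\<F>. closed_refinement X \<F> \<U> \<and> sigma_discrete X \<F>" by (rule dir1)
next
  assume "\<exists>\<F>. closed_refinement X \<F> \<U> \<and> sigma_discrete X \<F>"
  then obtain \<F> where "closed_refinement X \<F> \<U>" "sigma_discrete X \<F>" by blast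
  thus "\<exists>(T::'a set set) f. small_partition_of_unity X \<U> T f"
    using dir2[OF assms] by blast
qed

end
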